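(* Autarky reduction is confluent: for every DQCNF $F$, any two sequences of autarky-reduction steps starting from $F$ and continued until no further step is possible end in the same DQCNF (i.e. with the same clause set).
   Context: A DQCNF $F$ consists of a set $X$ of universal variables, a set $Y$ of existential variables, a dependency set $D_y\subseteq X$ for each $y\in Y$, and a matrix, a finite set of clauses over $X\cup Y$. An autarky for $F$ is a partial map $\varphi$ from a subset $\mathrm{dom}(\varphi)\subseteq Y$ to Boolean functions, where $\varphi(y)$ depends only on variables in $D_y$, such that every clause $C$ of $F$ either contains no variable of $\mathrm{dom}(\varphi)$ (then $\varphi$ does not touch $C$), or becomes a tautology (identically true as a function of all remaining variables) after substituting $\varphi(y)$ for each $y\in\mathrm{dom}(\varphi)$ occurring in $C$. An autarky is trivial if it touches no clause. $F[\varphi]$ denotes the DQCNF with the same variables and dependency sets as $F$ whose matrix consists of the clauses of $F$ not touched by $\varphi$. An autarky-reduction step replaces a DQCNF $G$ by $G[\varphi]$ for some non-trivial autarky $\varphi$ of $G$. *)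

theory Defs
  imports Main
begin

type_synonym 'v lit = "'v \<times> bool"
type_synonym 'v clause = "'v lit set"
type_synonym 'v bfun = "('v \<Rightarrow> bool) \<Rightarrow> bool"

record 'v dqcnf =
  univ :: "'v set"
  exi :: "'v set"
  dep :: "'v \<Rightarrow> 'v set"
  matrix :: "'v clause set"

definition vars_cl :: "'v clause \<Rightarrow> 'v set" where
  "vars_cl C = fst ` C"

definition wf_dqcnf :: "'v dqcnf \<Rightarrow> bool" where
  "wf_dqcnf F \<longleftrightarrow> finite (univ F) \<and> finite (exi F) \<and> univ F \<inter> exi F = {}
     \<and> (\<forall>y\<in>exi F. dep F y \<subseteq> univ F)
     \<and> finite (matrix F)
     \<and> (\<forall>C\<in>matrix F. finite C \<and> vars_cl C \<subseteq> univ F \<union> exi F)"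

definition depends_only :: "'v bfun \<Rightarrow> 'v set \<Rightarrow> bool" where
  "depends_only f S \<longleftrightarrow> (\<forall>a b. (\<forall>x\<in>S. a x = b x) \<longrightarrow> f a = f b)"

definition touches :: "('v \<rightharpoonup> 'v bfun) \<Rightarrow> 'v clause \<Rightarrow> bool" where
  "touches \<phi> C \<longleftrightarrow> vars_cl C \<inter> dom \<phi> \<noteq> {}"

definition subst_val :: "('v \<rightharpoonup> 'v bfun) \<Rightarrow> ('v \<Rightarrow> bool) \<Rightarrow> 'v \<Rightarrow> bool" where
  "subst_val \<phi> \<alpha> v = (case \<phi> v of Some f \<Rightarrow> f \<alpha> | None \<Rightarrow> \<alpha> v)"

definition taut_after :: "('v \<rightharpoonup> 'v bfun) \<Rightarrow> 'v clause \<Rightarrow> bool" where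
  "taut_after \<phi> C \<longleftrightarrow> (\<forall>\<alpha>. \<exists>(v, p)\<in>C. subst_val \<phi> \<alpha> v = p)"

definition is_autarky :: "'v dqcnf \<Rightarrow> ('v \<rightharpoonup> 'v bfun) \<Rightarrow> bool" where
  "is_autarky F \<phi> \<longleftrightarrow> dom \<phi> \<subseteq> exi F
     \<and> (\<forall>y f. \<phi> y = Some f \<longrightarrow> depends_only f (dep F y))
     \<and> (\<forall>C\<in>matrix F. \<not> touches \<phi> C \<or> taut_after \<phi> C)"

definition nontrivial :: "'v dqcnf \<Rightarrow> ('v \<rightharpoonup> 'v bfun) \<Rightarrow> bool" where
  "nontrivial F \<phi> \<longleftrightarrow> (\<exists>C\<in>matrix F. touches \<phi> C)"

definition apply_aut :: "'v dqcnf \<Rightarrow> ('v \<rightharpoonup> 'v bfun) \<Rightarrow> 'v dqcnf" where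
  "apply_aut F \<phi> = F\<lparr>matrix := {C\<in>matrix F. \<not> touches \<phi> C}\<rparr>"

definition aut_step :: "'v dqcnf \<Rightarrow> 'v dqcnf \<Rightarrow> bool" where
  "aut_step G G' \<longleftrightarrow> (\<exists>\<phi>. is_autarky G \<phi> \<and> nontrivial G \<phi> \<and> G' = apply_aut G \<phi>)"

end

theory Submission
  imports Defs
begin

lemma taut_transfer:
  assumes t: "taut_after \<phi> C"
    and agree: "\<forall>v\<in>vars_cl C. \<phi> v \<noteq> None \<longrightarrow> \<chi> v = \<phi> v"
    and dphi: "\<forall>y f. \<phi> y = Some f \<longrightarrow> depends_only f U"
    and dchi: "dom \<chi> \<inter> U = {}"
  shows "taut_after \<chi> C"
  unfolding taut_after_def
proof
  fix \<alpha>
  define \<alpha>' where "\<alpha>' = subst_val \<chi> \<alpha>"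
  have aU: "\<forall>x\<in>U. \<alpha>' x = \<alpha> x"
    using dchi by (auto simp: \<alpha>'_def subst_val_def split: option.splits)
  have eq: "subst_val \<phi> \<alpha>' v = subst_val \<chi> \<alpha> v" if "v \<in> vars_cl C" for v
  proof (cases "\<phi> v")
    case None
    then show ?thesis by (simp add: subst_val_def \<alpha>'_def)
  next
    case (Some f)
    then have "\<chi> v = Some f" using agree that by auto
    moreover have "f \<alpha>' = f \<alpha>" using dphi Some aU unfolding depends_only_def by blast
    ultimately show ?thesis using Some by (simp add: subst_val_def)
  qed
  from t obtain v p where "(v,p)\<in>C" "subst_val \<phi> \<alpha>' v = p"
    unfolding taut_after_def by blast
  moreover have "v \<in> vars_cl C" using \<open>(v,p)\<in>C\<close> by (force simp: vars_cl_def)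
  ultimately show "\<exists>(v, p)\<in>C. subst_val \<chi> \<alpha> v = p" using eq by blast
qed

lemma dep_univ:
  assumes "wf_dqcnf F" "is_autarky F \<phi>"
  shows "\<forall>y f. \<phi> y = Some f \<longrightarrow> depends_only f (univ F)"
    and "dom \<phi> \<inter> univ F = {}"
proof -
  show "\<forall>y f. \<phi> y = Some f \<longrightarrow> depends_only f (univ F)"
  proof (intro allI impI)
    fix y f assume s: "\<phi> y = Some f"
    then have "y \<in> exi F" "depends_only f (dep F y)" using assms(2)
      unfolding is_autarky_def by auto
    then have "dep F y \<subseteq> univ F" using assms(1) unfolding wf_dqcnf_def by auto
    then show "depends_only f (univ F)" using \<open>depends_only f (dep F y)\<close>
      unfolding depends_only_def by blast
  qed
  show "dom \<phi> \<inter> univ F = {}" using assms unfolding is_autarky_def wf_dqcnf_def by auto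
qed

lemma invariant:
  assumes wf: "wf_dqcnf F" and r: "aut_step\<^sup>*\<^sup>* F G"
  shows "\<exists>\<chi>. is_autarky F \<chi> \<and> G = apply_aut F \<chi>"
  using r
proof induction
  case base
  have "is_autarky F Map.empty" by (simp add: is_autarky_def touches_def)
  moreover have "F = apply_aut F Map.empty" by (simp add: apply_aut_def touches_def)
  ultimately show ?case by blast
next
  case (step G G')
  from step.IH obtain \<chi> where ac: "is_autarky F \<chi>" and G: "G = apply_aut F \<chi>" by blast
  from step.hyps(2) obtain \<psi> where ap: "is_autarky G \<psi>" and G': "G' = apply_aut G \<psi>"
    unfolding aut_step_def by blast
  have fields: "univ G = univ F" "exi G = exi F" "dep G = dep F"
    "matrix G = {C\<in>matrix F. \<not> touches \<chi> C}"
    using G by (auto simp: apply_aut_def)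
  have wfG: "wf_dqcnf G" using wf fields unfolding wf_dqcnf_def by auto
  let ?\<theta> = "\<psi> ++ \<chi>"
  have tch: "touches ?\<theta> C \<longleftrightarrow> touches \<chi> C \<or> touches \<psi> C" for C
    by (auto simp: touches_def)
  have dth: "dom ?\<theta> \<inter> univ F = {}"
    using dep_univ(2)[OF wf ac] dep_univ(2)[OF wfG ap] fields by auto
  have "is_autarky F ?\<theta>"
    unfolding is_autarky_def
  proof (intro conjI ballI allI impI)
    show "dom ?\<theta> \<subseteq> exi F" using ac ap fields unfolding is_autarky_def by auto
  next
    fix y f assume "?\<theta> y = Some f"
    then show "depends_only f (dep F y)" using ac ap fields unfolding is_autarky_def
      by (auto simp: map_add_Some_iff)
  next
    fix C assume C: "C \<in> matrix F"
    show "\<not> touches ?\<theta> C \<or> taut_after ?\<theta> C"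
    proof (cases "touches \<chi> C")
      case True
      then have "taut_after \<chi> C" using ac C unfolding is_autarky_def by auto
      then have "taut_after ?\<theta> C"
        by (rule taut_transfer[OF _ _ dep_univ(1)[OF wf ac] dth]) auto
      then show ?thesis by blast
    next
      case False
      then have CG: "C \<in> matrix G" using C fields by auto
      show ?thesis
      proof (cases "touches \<psi> C")
        case True
        then have "taut_after \<psi> C" using ap CG unfolding is_autarky_def by auto
        moreover have "\<forall>v\<in>vars_cl C. \<psi> v \<noteq> None \<longrightarrow> ?\<theta> v = \<psi> v"
        proof (intro ballI impI)
          fix v assume "v \<in> vars_cl C" "\<psi> v \<noteq> None"
          then have "\<chi> v = None" using False by (auto simp: touches_def)
          then show "?\<theta> v = \<psi> v" by (simp add: map_add_def)
        qed
        ultimately have "taut_after ?\<theta> C"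
          using taut_transfer[OF _ _ dep_univ(1)[OF wfG ap]] dth fields by auto
        then show ?thesis by blast
      next
        case False2: False
        then show ?thesis using False tch by blast
      qed
    qed
  qed
  moreover have "G' = apply_aut F ?\<theta>"
    using G G' tch by (auto simp: apply_aut_def)
  ultimately show ?case by blast
qed

lemma terminal_matrix:
  assumes wf: "wf_dqcnf F" and r: "aut_step\<^sup>*\<^sup>* F G" and t: "\<nexists>G'. aut_step G G'"
  shows "G = F\<lparr>matrix := {C\<in>matrix F. \<forall>\<phi>. is_autarky F \<phi> \<longrightarrow> \<not> touches \<phi> C}\<rparr>"
proof -
  obtain \<chi> where ac: "is_autarky F \<chi>" and G: "G = apply_aut F \<chi>"
    using invariant[OF wf r] by blast
  have "{C\<in>matrix F. \<not> touches \<chi> C} = {C\<in>matrix F. \<forall>\<phi>. is_autarky F \<phi> \<longrightarrow> \<not> touches \<phi> C}"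
  proof (intro equalityI subsetI)
    fix C assume "C \<in> {C\<in>matrix F. \<not> touches \<chi> C}"
    then have CF: "C \<in> matrix F" and CG: "C \<in> matrix G" using G by (auto simp: apply_aut_def)
    show "C \<in> {C\<in>matrix F. \<forall>\<phi>. is_autarky F \<phi> \<longrightarrow> \<not> touches \<phi> C}"
    proof (clarsimp simp: CF)
      fix \<phi> assume a: "is_autarky F \<phi>" and tc: "touches \<phi> C"
      have "is_autarky G \<phi>" using a G unfolding is_autarky_def by (auto simp: apply_aut_def)
      moreover have "nontrivial G \<phi>" using CG tc by (auto simp: nontrivial_def)
      ultimately have "aut_step G (apply_aut G \<phi>)" by (auto simp: aut_step_def)
      then show False using t by blast
    qed
  next
    fix C assume "C \<in> {C\<in>matrix F. \<forall>\<phi>. is_autarky F \<phi> \<longrightarrow> \<not> touches \<phi> C}"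
    then show "C \<in> {C\<in>matrix F. \<not> touches \<chi> C}" using ac by auto
  qed
  then show ?thesis using G by (simp add: apply_aut_def)
qed

theorem lemma2:
  fixes F G H :: "'v dqcnf"
  assumes "wf_dqcnf F"
    and "aut_step\<^sup>*\<^sup>* F G" and "\<nexists>G'. aut_step G G'"
    and "aut_step\<^sup>*\<^sup>* F H" and "\<nexists>H'. aut_step H H'"
  shows "G = H"
  using terminal_matrix[OF assms(1,2,3)] terminal_matrix[OF assms(1,4,5)] by simp

end
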